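(* Let $n\geq 1$ and let $C$ be an all-ones CRC in $G_n$ with $\mathbf{0}\in C$ and $-e_n\in C$. Then: (1) for every slice pair $\{x,x-e_n\}$ there is $i\in\{0,\ldots,\rho\}$ with $x,x-e_n\in C_i$; (2) if an $n$-line contains words of $C_i$, then the words of $C_i$ on that line form a set invariant under translation by $\pm 4e_n$ and are a union of slice pairs; in particular every $n$-line is a union of slice pairs, which lie alternately in $C_i$ and $C_{i+1}$ for some $i\in\{0,\ldots,\rho-1\}$.
   Context: $G_n$: vertex set $\mathbb{Z}^n$, $x\sim y$ iff $\sum_i|x_i-y_i|=1$; $e_i$ is the $i$-th unit vector, $\mathbf{0}$ the all-zero word. For a code $C$ with covering radius $\rho$, $C_i=\{v:d(v,C)=i\}$. $C$ is a CRC if for all $i,j$ every vertex of $C_i$ has the same number $\alpha_{ij}$ of neighbours in $C_j$, with $\alpha_{ij}=0$ for $|i-j|>1$; $a_i=\alpha_{ii}$, $b_i=\alpha_{i,i+1}$, $c_i=\alpha_{i,i-1}$. $C$ is all-ones if $a_i=1$ for all $i=0,\ldots,\rho$. For $s\in\mathbb{Z}$, the $s$-slice is $\{x\in\mathbb{Z}^n: x_n\in\{2s,2s-1\}\}$; a slice pair is a pair $\{x,x-e_n\}$ with $x_n=2s$ for some $s$ (both in the $s$-slice). An $n$-line is a set $\{x+te_n:t\in\mathbb{Z}\}$. *)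

theory Defs
  imports Main
begin

text \<open>Vertices of G_n are integer lists of length n; coordinate i (1-based in the paper)
  is list index i-1, so e_n is the unit vector at index n-1.\<close>

definition vtx :: "nat \<Rightarrow> int list set" where
  "vtx n = {x. length x = n}"

definition adjG :: "nat \<Rightarrow> int list \<Rightarrow> int list \<Rightarrow> bool" where
  "adjG n x y \<longleftrightarrow> length x = n \<and> length y = n \<and> (\<Sum>i<n. \<bar>x ! i - y ! i\<bar>) = 1"

definition unitv :: "nat \<Rightarrow> nat \<Rightarrow> int list" where
  "unitv n k = map (\<lambda>j. if j = k then 1 else 0) [0..<n]"

definition vadd :: "int list \<Rightarrow> int list \<Rightarrow> int list" where
  "vadd x y = map2 (+) x y"

definition smul :: "int \<Rightarrow> int list \<Rightarrow> int list" where
  "smul t x = map (\<lambda>a. t * a) x"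

definition gdist :: "nat \<Rightarrow> int list \<Rightarrow> int list \<Rightarrow> nat" where
  "gdist n u v = (LEAST k. (adjG n ^^ k) u v)"

definition dcode :: "nat \<Rightarrow> int list set \<Rightarrow> int list \<Rightarrow> nat" where
  "dcode n C v = (LEAST k. \<exists>c\<in>C. gdist n v c = k)"

definition layer :: "nat \<Rightarrow> int list set \<Rightarrow> nat \<Rightarrow> int list set" where
  "layer n C i = {v \<in> vtx n. dcode n C v = i}"

definition covering_radius :: "nat \<Rightarrow> int list set \<Rightarrow> nat \<Rightarrow> bool" where
  "covering_radius n C \<rho> \<longleftrightarrow> (\<forall>v\<in>vtx n. dcode n C v \<le> \<rho>) \<and> (\<exists>v\<in>vtx n. dcode n C v = \<rho>)"

definition nbrs_in :: "nat \<Rightarrow> int list \<Rightarrow> int list set \<Rightarrow> nat" where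
  "nbrs_in n v A = card {y \<in> A. adjG n v y}"

definition is_CRC :: "nat \<Rightarrow> int list set \<Rightarrow> nat \<Rightarrow> bool" where
  "is_CRC n C \<rho> \<longleftrightarrow> C \<subseteq> vtx n \<and> C \<noteq> {} \<and> covering_radius n C \<rho> \<and>
     (\<forall>i\<le>\<rho>. \<forall>j\<le>\<rho>. \<exists>\<alpha>. (\<forall>v\<in>layer n C i. nbrs_in n v (layer n C j) = \<alpha>) \<and>
        (nat \<bar>int i - int j\<bar> > 1 \<longrightarrow> \<alpha> = 0))"

definition all_ones_CRC :: "nat \<Rightarrow> int list set \<Rightarrow> nat \<Rightarrow> bool" where
  "all_ones_CRC n C \<rho> \<longleftrightarrow> is_CRC n C \<rho> \<and>
     (\<forall>i\<le>\<rho>. \<forall>v\<in>layer n C i. nbrs_in n v (layer n C i) = 1)"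

definition nline :: "nat \<Rightarrow> int list \<Rightarrow> int list set" where
  "nline n x = {vadd x (smul t (unitv n (n - 1))) | t. True}"

definition partner :: "nat \<Rightarrow> int list \<Rightarrow> int list" where
  "partner n x = (if even (x ! (n - 1)) then vadd x (smul (-1) (unitv n (n - 1)))
                  else vadd x (unitv n (n - 1)))"

end

theory Submission imports Defs begin

definition mv :: "int list \<Rightarrow> nat \<Rightarrow> int \<Rightarrow> int list" where
  "mv v k t = v[k := v!k + t]"

lemma mv_length[simp]: "length (mv v k t) = length v" by (simp add: mv_def)
lemma mv_nth: "k < length v \<Longrightarrow> mv v k t ! i = (if i = k then v!k + t else v!i)"
  by (simp add: mv_def nth_list_update)
lemma mv_comm: "k < length v \<Longrightarrow> k' < length v \<Longrightarrow> mv (mv v k s) k' t = mv (mv v k' t) k s"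
  by (rule nth_equalityI) (auto simp: mv_nth)
lemma mv_mv_same: "k < length v \<Longrightarrow> mv (mv v k s) k t = mv v k (s+t)"
  by (rule nth_equalityI) (auto simp: mv_nth)
lemma mv_0[simp]: "mv v k 0 = v" by (simp add: mv_def)
lemma mv_upd[simp]: "m < length x \<Longrightarrow> mv (x[m:=a]) m t = x[m := a + t]"
  by (simp add: mv_def)
lemma mv_inj: "k < length y \<Longrightarrow> length y = length y' \<Longrightarrow> mv y k t = mv y' k t \<Longrightarrow> y = y'"
proof (rule nth_equalityI)
  fix i assume "k < length y" "length y = length y'" "mv y k t = mv y' k t" "i < length y"
  thus "y ! i = y' ! i" using mv_nth[of k y t i] mv_nth[of k y' t i] by (auto split: if_splits)
qed auto
lemma mv_neq: "k < length v \<Longrightarrow> k' < length v \<Longrightarrow> k \<noteq> k' \<Longrightarrow> s \<noteq> 0 \<Longrightarrow> mv v k s \<noteq> mv v k' s'"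
proof
  assume a: "k < length v" "k' < length v" "k \<noteq> k'" "s \<noteq> 0" "mv v k s = mv v k' s'"
  hence "mv v k s ! k = mv v k' s' ! k" by simp
  moreover have "mv v k s ! k = v!k + s" using a(1) by (simp add: mv_nth)
  moreover have "mv v k' s' ! k = v!k" using a(2,3) by (simp add: mv_nth)
  ultimately show False using a(4) by simp
qed

lemma adj_sym: "adjG n x y \<Longrightarrow> adjG n y x"
  unfolding adjG_def by (simp add: abs_minus_commute)

lemma adj_mv: assumes "length v = n" "k < n" "s = 1 \<or> s = -1" shows "adjG n v (mv v k s)"
proof -
  have "(\<Sum>i<n. \<bar>v!i - mv v k s ! i\<bar>) = (\<Sum>i<n. if i = k then 1 else 0)"
    by (rule sum.cong) (use assms in \<open>auto simp: mv_nth\<close>)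
  also have "\<dots> = 1" using assms by simp
  finally show ?thesis using assms by (simp add: adjG_def)
qed

lemma adj_cases: assumes "adjG n v y" shows "\<exists>k<n. \<exists>s. (s = 1 \<or> s = -1) \<and> y = mv v k s"
proof -
  from assms have lv: "length v = n" "length y = n" and S: "(\<Sum>i<n. \<bar>v!i - y!i\<bar>) = 1"
    by (auto simp: adjG_def)
  have "\<exists>k<n. v!k \<noteq> y!k"
  proof (rule ccontr)
    assume "\<not> ?thesis"
    hence "\<forall>i\<in>{..<n}. \<bar>v!i - y!i\<bar> = 0" by auto
    hence "(\<Sum>i<n. \<bar>v!i - y!i\<bar>) = 0" by simp
    with S show False by simp
  qed
  then obtain k where k: "k<n" "v!k \<noteq> y!k" by blast
  have split: "(\<Sum>i<n. \<bar>v!i - y!i\<bar>) = \<bar>v!k - y!k\<bar> + (\<Sum>i\<in>{..<n}-{k}. \<bar>v!i - y!i\<bar>)"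
    using k by (simp add: sum.remove)
  have nn: "(\<Sum>i\<in>{..<n}-{k}. \<bar>v!i - y!i\<bar>) \<ge> 0" by (simp add: sum_nonneg)
  have "\<bar>v!k - y!k\<bar> \<ge> 1" using k by auto
  hence e1: "\<bar>v!k - y!k\<bar> = 1" and e0: "(\<Sum>i\<in>{..<n}-{k}. \<bar>v!i - y!i\<bar>) = 0"
    using S split nn by linarith+
  from e0 have "\<forall>i\<in>{..<n}-{k}. \<bar>v!i - y!i\<bar> = 0" by (subst (asm) sum_nonneg_eq_0_iff) auto
  hence oth: "\<And>i. i<n \<Longrightarrow> i\<noteq>k \<Longrightarrow> y!i = v!i" by auto
  define s where "s = y!k - v!k"
  have "s = 1 \<or> s = -1" using e1 unfolding s_def by auto
  moreover have "y = mv v k s"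
    by (rule nth_equalityI) (auto simp: lv mv_nth k oth s_def)
  ultimately show ?thesis using k by blast
qed

lemma fin_nbrs: "finite {y. adjG n v y}"
proof -
  have "{y. adjG n v y} \<subseteq> (\<lambda>(k,s). mv v k s) ` ({..<n} \<times> {1,-1})"
    by (force dest: adj_cases)
  thus ?thesis by (rule finite_subset) auto
qed

lemma conv: "length x = n \<Longrightarrow> m < n \<Longrightarrow> vadd x (smul t (unitv n m)) = x[m := x!m + t]"
  by (rule nth_equalityI) (auto simp: vadd_def smul_def unitv_def nth_list_update)

locale AO =
  fixes n \<rho> :: nat and C :: "int list set"
  assumes n1: "n \<ge> 1" and AOC: "all_ones_CRC n C \<rho>" and z0: "replicate n 0 \<in> C"
    and z1: "smul (-1) (unitv n (n - 1)) \<in> C"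
begin

abbreviation "L \<equiv> dcode n C"
abbreviation "m \<equiv> n - 1"
definition Pt where "Pt v w \<longleftrightarrow> adjG n v w \<and> L v = L w"

lemma m_lt: "m < n" using n1 by simp
lemma CRC: "is_CRC n C \<rho>" using AOC by (simp add: all_ones_CRC_def)
lemma Lle: "length v = n \<Longrightarrow> L v \<le> \<rho>" using CRC by (auto simp: is_CRC_def covering_radius_def vtx_def)
lemma in_layer: "v \<in> layer n C i \<longleftrightarrow> length v = n \<and> L v = i" by (simp add: layer_def vtx_def)
lemma nb_eq: "nbrs_in n v (layer n C j) = card {y. adjG n v y \<and> L y = j}"
  unfolding nbrs_in_def by (rule arg_cong[where f=card]) (auto simp: layer_def vtx_def adjG_def)

lemma AO1: "\<forall>i\<le>\<rho>. \<forall>v\<in>layer n C i. nbrs_in n v (layer n C i) = 1"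
  using AOC unfolding all_ones_CRC_def by (elim conjE)

lemma one: assumes lv: "length v = n" shows "card {y. adjG n v y \<and> L y = L v} = 1"
proof -
  have "L v \<le> \<rho>" using lv by (rule Lle)
  moreover have "v \<in> layer n C (L v)" using lv by (simp add: in_layer)
  ultimately have "nbrs_in n v (layer n C (L v)) = 1" using AO1 by blast
  thus ?thesis by (simp add: nb_eq)
qed

lemma uniq_ex: assumes "length v = n" shows "\<exists>w. Pt v w"
proof -
  obtain x where "{y. adjG n v y \<and> L y = L v} = {x}" using one[OF assms] card_1_singletonE by blast
  hence "adjG n v x \<and> L x = L v" by blast
  thus ?thesis by (auto simp: Pt_def)
qed

lemma uniq: assumes "Pt v w" "Pt v w'" shows "w = w'"
proof -
  have "length v = n" using assms by (simp add: Pt_def adjG_def)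
  then obtain x where x: "{y. adjG n v y \<and> L y = L v} = {x}" using one[OF \<open>length v = n\<close>] card_1_singletonE by blast
  have "w \<in> {y. adjG n v y \<and> L y = L v}" "w' \<in> {y. adjG n v y \<and> L y = L v}"
    using assms by (auto simp: Pt_def)
  hence "w \<in> {x}" "w' \<in> {x}" unfolding x .
  thus ?thesis by simp
qed

lemma Pt_sym: "Pt v w \<Longrightarrow> Pt w v" unfolding Pt_def using adj_sym by metis

lemma CRC_all: "i \<le> \<rho> \<Longrightarrow> j \<le> \<rho> \<Longrightarrow> \<exists>\<alpha>. (\<forall>v\<in>layer n C i. nbrs_in n v (layer n C j) = \<alpha>) \<and>
        (nat \<bar>int i - int j\<bar> > 1 \<longrightarrow> \<alpha> = 0)"
  using CRC unfolding is_CRC_def by (elim conjE) simp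

lemma alpha: "i \<le> \<rho> \<Longrightarrow> j \<le> \<rho> \<Longrightarrow> u \<in> layer n C i \<Longrightarrow> u' \<in> layer n C i \<Longrightarrow>
   nbrs_in n u (layer n C j) = nbrs_in n u' (layer n C j)"
proof -
  assume a: "i \<le> \<rho>" "j \<le> \<rho>" "u \<in> layer n C i" "u' \<in> layer n C i"
  from CRC_all[OF a(1,2)] obtain \<alpha> where "\<forall>v\<in>layer n C i. nbrs_in n v (layer n C j) = \<alpha>" by blast
  thus ?thesis using a(3,4) by simp
qed

lemma lip: assumes a: "adjG n v y" shows "L y \<le> L v + 1 \<and> L v \<le> L y + 1"
proof (rule ccontr)
  assume nc: "\<not> ?thesis"
  have lv: "length v = n" "length y = n" using a by (auto simp: adjG_def)
  have i: "L v \<le> \<rho>" "L y \<le> \<rho>" using Lle lv by auto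
  have "\<exists>\<alpha>. (\<forall>u\<in>layer n C (L v). nbrs_in n u (layer n C (L y)) = \<alpha>) \<and>
        (nat \<bar>int (L v) - int (L y)\<bar> > 1 \<longrightarrow> \<alpha> = 0)"
    using CRC_all[OF i] by blast
  then obtain \<alpha> where A: "\<forall>u\<in>layer n C (L v). nbrs_in n u (layer n C (L y)) = \<alpha>"
     and B: "nat \<bar>int (L v) - int (L y)\<bar> > 1 \<longrightarrow> \<alpha> = 0" by blast
  have "nat \<bar>int (L v) - int (L y)\<bar> > 1" using nc by arith
  hence "\<alpha> = 0" using B by simp
  hence "card {y'. adjG n v y' \<and> L y' = L y} = 0" using A lv by (simp add: in_layer nb_eq)
  moreover have "finite {y'. adjG n v y' \<and> L y' = L y}"
    by (rule finite_subset[OF _ fin_nbrs[of n v]]) auto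
  moreover have "y \<in> {y'. adjG n v y' \<and> L y' = L y}" using a by simp
  ultimately show False by auto
qed

lemma code0: "c \<in> C \<Longrightarrow> L c = 0"
  unfolding dcode_def
  by (rule Least_eq_0) (auto simp: gdist_def intro!: bexI[of _ c] Least_eq_0 relpowp_0_I)

lemma propag: assumes P: "Pt v w" and w: "w = mv v k t" and k: "k < n" and t: "t = 1 \<or> t = -1"
  and k': "k' < n" "k' \<noteq> k" and s: "s = 1 \<or> s = -1"
  shows "Pt (mv v k' s) (mv w k' s)"
proof -
  have lv: "length v = n" using P by (simp add: Pt_def adjG_def)
  define u where "u = mv v k' s"
  define u' where "u' = mv w k' s"
  have u'u: "u' = mv u k t" unfolding u_def u'_def w using mv_comm k k' lv by simp
  have a1: "adjG n v u" unfolding u_def by (rule adj_mv) (use lv k' s in auto)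
  have a2: "adjG n w u'" unfolding u'_def by (rule adj_mv) (use lv k' s w in auto)
  have a3: "adjG n u u'" unfolding u'u by (rule adj_mv) (use lv k t u_def in auto)
  have Lw: "L w = L v" using P by (simp add: Pt_def)
  have n1: "L u \<noteq> L v"
  proof
    assume "L u = L v" hence "Pt v u" using a1 by (simp add: Pt_def)
    hence "u = w" using uniq P by blast
    thus False using mv_neq[of k' v k s t] u_def w lv k k' s by auto
  qed
  have n2: "L u' \<noteq> L w"
  proof
    assume "L u' = L w" hence "Pt w u'" using a2 by (simp add: Pt_def)
    moreover have "Pt w v" using P Pt_sym by blast
    ultimately have "u' = v" using uniq by blast
    hence "u' ! k' = v ! k'" by simp
    moreover have "u' ! k' = v!k' + s" unfolding u'_def w using lv k k' by (simp add: mv_nth)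
    ultimately show False using s by simp
  qed
  have c1: "L u = L v + 1 \<or> L v = L u + 1" using lip[OF a1] n1 by linarith
  have c2: "L u' = L v + 1 \<or> L v = L u' + 1" using lip[OF a2] n2 Lw by linarith
  have c3: "L u' \<le> L u + 1 \<and> L u \<le> L u' + 1" using lip[OF a3] .
  have "L u = L u'" using c1 c2 c3 by (elim disjE) linarith+
  thus ?thesis using a3 unfolding Pt_def u_def u'_def by simp
qed


lemma axis: assumes P: "Pt v (mv v m t)" and t: "t = 1 \<or> t = -1"
  shows "Pt (mv v m (-t)) (mv v m (-2*t))"
proof -
  have lv: "length v = n" using P by (simp add: Pt_def adjG_def)
  define w where "w = mv v m (-t)"
  have lw: "length w = n" using lv by (simp add: w_def)
  obtain p where Pp: "Pt w p" using uniq_ex[OF lw] by auto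
  have "adjG n w p" using Pp by (simp add: Pt_def)
  then obtain k s where k: "k < n" and s: "s = 1 \<or> s = -1" and p: "p = mv w k s"
    using adj_cases by blast
  have wv: "mv w m t = v" unfolding w_def using lv m_lt by (simp add: mv_mv_same)
  show ?thesis
  proof (cases "k = m")
    case True
    show ?thesis
    proof (cases "s = t")
      case True
      hence "p = v" using p \<open>k=m\<close> wv by simp
      hence "Pt v w" using Pp Pt_sym by simp
      hence "w = mv v m t" using P uniq by blast
      hence "w!m = (mv v m t)!m" by simp
      thus ?thesis using lv m_lt t by (simp add: w_def mv_nth)
    next
      case False
      hence "s = -t" using s t by auto
      hence "p = mv v m (-2*t)" using p \<open>k=m\<close> w_def lv m_lt by (simp add: mv_mv_same)
      thus ?thesis using Pp w_def by simp
    qed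
  next
    case False
    have "Pt (mv w m t) (mv p m t)"
      by (rule propag[OF Pp p k s m_lt _ t]) (use False in auto)
    moreover have "mv p m t = mv v k s" unfolding p using mv_comm[of k w m s t] k lw m_lt wv by simp
    ultimately have "Pt v (mv v k s)" using wv by simp
    hence "mv v k s = mv v m t" using P uniq by blast
    thus ?thesis using mv_neq[of k v m s t] k lv m_lt False s by auto
  qed
qed

definition M :: "int list \<Rightarrow> nat" where "M h = (\<Sum>i<length h. nat \<bar>h!i\<bar>)"

lemma stepA: "length h = n \<Longrightarrow> h!m = 0 \<Longrightarrow> Pt h (mv h m (-1))"
proof (induction "M h" arbitrary: h rule: less_induct)
  case less
  show ?case
  proof (cases "\<forall>i<n. h!i = 0")
    case True
    hence h0: "h = replicate n 0" by (intro nth_equalityI) (auto simp: less.prems)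
    have e: "smul (-1) (unitv n m) = mv h m (-1)"
      by (rule nth_equalityI) (auto simp: h0 smul_def unitv_def mv_nth m_lt)
    have "L h = 0" "L (mv h m (-1)) = 0" using code0 z0 z1 h0 e by auto
    moreover have "adjG n h (mv h m (-1))" by (rule adj_mv) (use less.prems n1 in auto)
    ultimately show ?thesis by (simp add: Pt_def)
  next
    case False
    then obtain k where k: "k<n" "h!k \<noteq> 0" by auto
    have km: "k \<noteq> m" using less.prems k by auto
    define \<sigma> where "\<sigma> = sgn (h!k)"
    have \<sigma>: "\<sigma> = 1 \<or> \<sigma> = -1" using k by (auto simp: \<sigma>_def sgn_if)
    define h' where "h' = mv h k (-\<sigma>)"
    have lh': "length h' = n" using less.prems by (simp add: h'_def)
    have h'm: "h'!m = 0" using km less.prems k by (simp add: h'_def mv_nth)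
    have "M h' < M h"
      unfolding M_def lh' less.prems(1)
    proof (rule sum_strict_mono_ex1)
      show "\<forall>i\<in>{..<n}. nat \<bar>h' ! i\<bar> \<le> nat \<bar>h ! i\<bar>"
        using less.prems k by (auto simp: h'_def mv_nth \<sigma>_def sgn_if)
      show "\<exists>i\<in>{..<n}. nat \<bar>h' ! i\<bar> < nat \<bar>h ! i\<bar>"
        using less.prems k by (auto simp: h'_def mv_nth \<sigma>_def sgn_if intro!: bexI[of _ k])
    qed simp
    hence IH: "Pt h' (mv h' m (-1))" using less.hyps lh' h'm by blast
    have "Pt (mv h' k \<sigma>) (mv (mv h' m (-1)) k \<sigma>)"
      by (rule propag[OF IH refl m_lt _ k(1) km \<sigma>]) simp
    moreover have "mv h' k \<sigma> = h" using less.prems k by (simp add: h'_def mv_mv_same)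
    moreover have "mv (mv h' m (-1)) k \<sigma> = mv (mv h' k \<sigma>) m (-1)"
      using mv_comm lh' k m_lt by simp
    ultimately show ?thesis by simp
  qed
qed

lemma pr: assumes lx: "length x = n" shows "Pt (x[m := 2*z]) (x[m := 2*z - 1])"
proof (induction z rule: int_induct[where k=0])
  case base
  have "Pt (x[m:=0]) (mv (x[m:=0]) m (-1))" by (rule stepA) (use lx m_lt in auto)
  thus ?case using lx m_lt by simp
next
  case (step1 z)
  have "Pt (mv (x[m:=2*z]) m (-(-1))) (mv (x[m:=2*z]) m (-2*(-1)))"
    by (rule axis) (use step1 lx m_lt in auto)
  hence "Pt (x[m:=2*z+1]) (x[m:=2*z+2])" using lx m_lt by simp
  hence "Pt (x[m:=2*z+2]) (x[m:=2*z+1])" by (rule Pt_sym)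
  moreover have eqs: "2*(z+1) = 2*z+2" "2*(z+1) - 1 = 2*z+1" by auto
  ultimately show ?case by (simp only: eqs)
next
  case (step2 z)
  have "Pt (x[m:=2*z-1]) (mv (x[m:=2*z-1]) m 1)"
    using Pt_sym[OF step2(2)] lx m_lt by simp
  hence "Pt (mv (x[m:=2*z-1]) m (-1)) (mv (x[m:=2*z-1]) m (-2*1))"
    by (rule axis) simp
  hence "Pt (x[m:=2*z-2]) (x[m:=2*z-3])" using lx m_lt by simp
  moreover have eqs: "2*(z-1) = 2*z-2" "2*(z-1) - 1 = 2*z-3" by auto
  ultimately show ?case by (simp only: eqs)
qed


definition ell where "ell x z = L (x[m := 2*z])"

lemma ell2: "length x = n \<Longrightarrow> L (x[m := 2*z - 1]) = ell x z"
  using pr[of x z] by (simp add: Pt_def ell_def)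

lemma ell_step: assumes lx: "length x = n"
  shows "ell x (z+1) = ell x z + 1 \<or> ell x z = ell x (z+1) + 1"
proof -
  define a where "a = x[m:=2*z]"
  define b where "b = x[m:=2*z+1]"
  have ba: "b = mv a m 1" using lx m_lt by (simp add: a_def b_def)
  have adj: "adjG n a b" unfolding ba by (rule adj_mv) (use lx m_lt a_def in auto)
  have Lb: "L b = ell x (z+1)" using ell2[OF lx, of "z+1"] by (simp add: b_def algebra_simps)
  have La: "L a = ell x z" by (simp add: a_def ell_def)
  have "L b \<noteq> L a"
  proof
    assume "L b = L a"
    hence "Pt a b" using adj by (simp add: Pt_def)
    hence "b = x[m := 2*z - 1]" using pr[OF lx, of z] uniq a_def by blast
    hence "b!m = (x[m := 2*z - 1])!m" by simp
    thus False using lx m_lt by (simp add: b_def)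
  qed
  thus ?thesis using lip[OF adj] La Lb by linarith
qed

lemma count: assumes P: "Pt v w" and w: "w = mv v m (-t)" and t: "t = 1 \<or> t = -1"
  and a: "L (mv v m t) = L v + 1" shows "L (mv w m (-t)) = L v + 1"
proof (rule ccontr)
  assume nb: "L (mv w m (-t)) \<noteq> L v + 1"
  have lv: "length v = n" using P by (simp add: Pt_def adjG_def)
  have lw: "length w = n" using lv w by simp
  define j where "j = L v + 1"
  define A where "A = {y. adjG n v y \<and> L y = j}"
  define B where "B = {y. adjG n w y \<and> L y = j}"
  have jr: "j \<le> \<rho>" using Lle[of "mv v m t"] a lv by (simp add: j_def)
  have Lw: "L w = L v" using P by (simp add: Pt_def)
  have cAB: "card A = card B"
    using alpha[of "L v" j v w] Lle[OF lv] jr lv lw Lw by (simp add: in_layer nb_eq A_def B_def)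
  have mt: "-t = 1 \<or> -t = -1" using t by auto
  have finB: "finite B" unfolding B_def by (rule finite_subset[OF _ fin_nbrs[of n w]]) auto
  define f where "f = (\<lambda>y. mv y m t)"
  have wv: "mv w m t = v" using w lv m_lt by (simp add: mv_mv_same)
  have injf: "inj_on f B"
  proof
    fix y y' assume "y \<in> B" "y' \<in> B" "f y = f y'"
    thus "y = y'" using mv_inj[of m y y' t] m_lt by (auto simp: B_def f_def adjG_def)
  qed
  have eqA: "A = insert (mv v m t) (f ` B)"
  proof
    show "A \<subseteq> insert (mv v m t) (f ` B)"
    proof
      fix y assume yA: "y \<in> A"
      hence "adjG n v y" by (simp add: A_def)
      then obtain k s where k: "k<n" and s: "s = 1 \<or> s = -1" and y: "y = mv v k s"
        using adj_cases by blast
      show "y \<in> insert (mv v m t) (f ` B)"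
      proof (cases "k = m")
        case True
        show ?thesis
        proof (cases "s = t")
          case True thus ?thesis using y \<open>k=m\<close> by simp
        next
          case False
          hence "s = -t" using s t by auto
          hence "y = w" using y w \<open>k=m\<close> by simp
          thus ?thesis using yA Lw by (simp add: A_def j_def)
        qed
      next
        case False
        have "Pt (mv v k s) (mv w k s)" by (rule propag[OF P w m_lt mt k False s])
        hence "mv w k s \<in> B" using yA y adj_mv[OF lw k s] by (simp add: A_def B_def Pt_def)
        moreover have "f (mv w k s) = y" unfolding f_def y using mv_comm[of k w m s t] lw k m_lt wv by simp
        ultimately show ?thesis by blast
      qed
    qed
  next
    show "insert (mv v m t) (f ` B) \<subseteq> A"
    proof
      fix y assume "y \<in> insert (mv v m t) (f ` B)"
      then consider "y = mv v m t" | y' where "y' \<in> B" "y = f y'" by blast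
      thus "y \<in> A"
      proof cases
        case 1 thus ?thesis using adj_mv[OF lv m_lt t] a by (simp add: A_def j_def)
      next
        case 2
        hence "adjG n w y'" by (simp add: B_def)
        then obtain k s where k: "k<n" and s: "s = 1 \<or> s = -1" and y': "y' = mv w k s"
          using adj_cases by blast
        show ?thesis
        proof (cases "k = m")
          case True
          show ?thesis
          proof (cases "s = t")
            case True
            hence "y' = v" using y' \<open>k=m\<close> wv by simp
            thus ?thesis using 2 by (simp add: B_def j_def)
          next
            case False
            hence "s = -t" using s t by auto
            thus ?thesis using 2 y' \<open>k=m\<close> nb by (simp add: B_def j_def)
          qed
        next
          case False
          have "Pt (mv v k s) (mv w k s)" by (rule propag[OF P w m_lt mt k False s])
          moreover have "y = mv v k s" using 2 unfolding f_def y' using mv_comm[of k w m s t] lw k m_lt wv by simp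
          ultimately show ?thesis using 2 y' adj_mv[OF lv k s] by (simp add: A_def B_def Pt_def)
        qed
      qed
    qed
  qed
  have notin: "mv v m t \<notin> f ` B"
  proof
    assume "mv v m t \<in> f ` B"
    then obtain y where "y \<in> B" "mv y m t = mv v m t" by (auto simp: f_def)
    moreover hence "y = v" using mv_inj[of m y v t] m_lt lv by (auto simp: B_def adjG_def)
    ultimately show False by (simp add: B_def j_def)
  qed
  have "card A = Suc (card B)" using eqA notin finB injf by (simp add: card_image)
  thus False using cAB by simp
qed


lemma alt: assumes lx: "length x = n" shows "ell x (z+1) = ell x (z-1)"
proof -
  have e1: "L (x[m := 2*z+1]) = ell x (z+1)" using ell2[OF lx, of "z+1"] by (simp add: algebra_simps)
  have e2: "L (x[m := 2*z-2]) = ell x (z-1)" by (simp add: ell_def algebra_simps)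
  have e3: "L (x[m := 2*z-1]) = ell x z" using ell2[OF lx] by simp
  have e4: "L (x[m := 2*z]) = ell x z" by (simp add: ell_def)
  have c1: "ell x (z+1) = ell x z + 1 \<Longrightarrow> ell x (z-1) = ell x z + 1"
  proof -
    assume h: "ell x (z+1) = ell x z + 1"
    have "L (mv (x[m := 2*z-1]) m (-1)) = L (x[m := 2*z]) + 1"
    proof (rule count[where t=1])
      show "Pt (x[m := 2*z]) (x[m := 2*z-1])" by (rule pr[OF lx])
      show "x[m := 2*z-1] = mv (x[m := 2*z]) m (-1)" using lx m_lt by simp
      show "L (mv (x[m := 2*z]) m 1) = L (x[m := 2*z]) + 1" using lx m_lt e1 e4 h by simp
    qed simp
    thus ?thesis using lx m_lt e2 e4 by (simp add: algebra_simps)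
  qed
  have c2: "ell x (z-1) = ell x z + 1 \<Longrightarrow> ell x (z+1) = ell x z + 1"
  proof -
    assume h: "ell x (z-1) = ell x z + 1"
    have "L (mv (x[m := 2*z]) m (-(-1))) = L (x[m := 2*z-1]) + 1"
    proof (rule count[where t="-1"])
      show "Pt (x[m := 2*z-1]) (x[m := 2*z])" by (rule Pt_sym[OF pr[OF lx]])
      show "x[m := 2*z] = mv (x[m := 2*z-1]) m (-(-1))" using lx m_lt by simp
      have "mv (x[m := 2*z-1]) m (-1) = x[m := 2*z-2]" using lx m_lt by simp
      thus "L (mv (x[m := 2*z-1]) m (-1)) = L (x[m := 2*z-1]) + 1" using e2 e3 h by simp
    qed simp
    thus ?thesis using lx m_lt e1 e3 by (simp add: algebra_simps)
  qed
  have s1: "ell x (z+1) = ell x z + 1 \<or> ell x z = ell x (z+1) + 1" by (rule ell_step[OF lx])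
  have s2: "ell x z = ell x (z-1) + 1 \<or> ell x (z-1) = ell x z + 1"
    using ell_step[OF lx, of "z-1"] by simp
  show ?thesis using c1 c2 s1 s2 by linarith
qed

lemma per2: "length x = n \<Longrightarrow> ell x (z+2) = ell x z"
  using alt[of x "z+1"] by (simp add: add.assoc)

lemma ell_par: assumes lx: "length x = n"
  shows "ell x z = (if even z then ell x 0 else ell x 1)"
proof -
  let ?E = "\<lambda>z::int. if even z then ell x 0 else ell x 1"
  have "ell x z = ?E z \<and> ell x (z+1) = ?E (z+1)"
  proof (induction z rule: int_induct[where k=0])
    case base thus ?case by simp
  next
    case (step1 i)
    have "ell x (i+1+1) = ell x i" using per2[OF lx, of i] by (simp add: add.assoc)
    thus ?case using step1 by auto
  next
    case (step2 i)
    have e: "i - 1 + 2 = i + 1" by simp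
    have "ell x (i+1) = ell x (i-1)" using per2[OF lx, of "i-1"] unfolding e .
    thus ?case using step2 by auto
  qed
  thus ?thesis by simp
qed

lemma Lshift: assumes ly: "length y = n" shows "L (y[m := c + 4]) = L (y[m := c])"
proof (cases "even c")
  case True
  then obtain z where c: "c = 2*z" by blast
  have "L (y[m := c + 4]) = ell y (z+2)" using c by (simp add: ell_def algebra_simps)
  also have "\<dots> = ell y z" by (rule per2[OF ly])
  finally show ?thesis using c by (simp add: ell_def)
next
  case False
  then obtain b where "c = 2*b + 1" by (rule oddE)
  then obtain z where c: "c = 2*z - 1" by (intro that[of "b+1"]) simp
  have e: "c + 4 = 2*(z+2) - 1" using c by simp
  have "L (y[m := c + 4]) = L (y[m := 2*(z+2) - 1])" by (simp only: e)
  also have "\<dots> = ell y (z+2)" by (rule ell2[OF ly])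
  also have "\<dots> = ell y z" by (rule per2[OF ly])
  finally show ?thesis using c ell2[OF ly] by simp
qed


lemma convm: "length x = n \<Longrightarrow> vadd x (smul t (unitv n (n - 1))) = x[m := x!m + t]"
  using conv m_lt by blast

lemma convm2: "length x = n \<Longrightarrow> vadd x (smul t (unitv n (n - Suc 0))) = x[n - Suc 0 := x!(n - Suc 0) + t]"
  using convm by simp

lemma convm3: "length x = n \<Longrightarrow> vadd x (unitv n (n - Suc 0)) = x[n - Suc 0 := x!(n - Suc 0) + 1]"
proof -
  assume "length x = n"
  moreover have "smul 1 (unitv n (n - Suc 0)) = unitv n (n - Suc 0)" by (simp add: smul_def)
  ultimately show ?thesis using convm2[of x 1] by simp
qed

lemma Lpart: assumes ly: "length y = n"
  shows "partner n y = y[m := y!m + (if even (y!m) then -1 else 1)] \<and> L (partner n y) = L y"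
proof (cases "even (y!m)")
  case True
  then obtain z where c: "y!m = 2*z" by blast
  have yy: "y = y[m := 2*z]" using c[symmetric] by simp
  have "partner n y = y[m := 2*z - 1]" using True ly c by (simp add: partner_def convm convm2 convm3)
  moreover have "L (y[m := 2*z - 1]) = L y" using pr[OF ly, of z] yy by (simp add: Pt_def)
  ultimately show ?thesis using True c by simp
next
  case False
  then obtain b where "y!m = 2*b + 1" by (rule oddE)
  then obtain z where c: "y!m = 2*z - 1" by (intro that[of "b+1"]) simp
  have yy: "y = y[m := 2*z - 1]" using c[symmetric] by simp
  have "partner n y = y[m := 2*z]" using False ly c by (simp add: partner_def convm convm2 convm3)
  moreover have "L (y[m := 2*z]) = L y" using pr[OF ly, of z] yy by (simp add: Pt_def)
  ultimately show ?thesis using False c by simp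
qed

lemma main:
  shows
    "(\<forall>x\<in>vtx n. even (x ! (n - 1)) \<longrightarrow>
        (\<exists>i\<le>\<rho>. x \<in> layer n C i \<and> vadd x (smul (-1) (unitv n (n - 1))) \<in> layer n C i))
   \<and> (\<forall>x\<in>vtx n. \<forall>i. layer n C i \<inter> nline n x \<noteq> {} \<longrightarrow>
        (\<forall>y\<in>layer n C i \<inter> nline n x.
            vadd y (smul 4 (unitv n (n - 1))) \<in> layer n C i \<inter> nline n x
          \<and> vadd y (smul (-4) (unitv n (n - 1))) \<in> layer n C i \<inter> nline n x
          \<and> partner n y \<in> layer n C i \<inter> nline n x))
   \<and> (\<forall>x\<in>vtx n. \<exists>i<\<rho>. \<exists>r::int. \<forall>s::int.
        (let k = (if even (s + r) then i else i + 1) in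
           vadd x (smul (2 * s - x ! (n - 1)) (unitv n (n - 1))) \<in> layer n C k
         \<and> vadd x (smul (2 * s - 1 - x ! (n - 1)) (unitv n (n - 1))) \<in> layer n C k))"
proof (intro conjI ballI impI allI)
  fix x assume xv: "x \<in> vtx n" and ev: "even (x ! (n - 1))"
  have lx: "length x = n" using xv by (simp add: vtx_def)
  obtain z where c: "x!m = 2*z" using ev by blast
  have xx: "x = x[m := 2*z]" using c[symmetric] by simp
  have "vadd x (smul (-1) (unitv n (n - 1))) = x[m := 2*z - 1]" using lx c by (simp add: convm convm2)
  moreover have "L (x[m := 2*z - 1]) = L x" using pr[OF lx, of z] xx by (simp add: Pt_def)
  ultimately show "\<exists>i\<le>\<rho>. x \<in> layer n C i \<and> vadd x (smul (-1) (unitv n (n - 1))) \<in> layer n C i"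
    using lx Lle[OF lx] by (auto simp: in_layer)
next
  fix x i y assume xv: "x \<in> vtx n" and yy: "y \<in> layer n C i \<inter> nline n x"
  have lx: "length x = n" using xv by (simp add: vtx_def)
  from yy obtain t where yt: "y = vadd x (smul t (unitv n (n - 1)))" by (auto simp: nline_def)
  have y: "y = x[m := x!m + t]" using yt lx by (simp add: convm convm2 convm3)
  have ly: "length y = n" and Ly: "L y = i" using yy by (auto simp: in_layer)
  have ym: "y!m = x!m + t" using y lx m_lt by simp
  have online: "\<And>u. x[m := x!m + u] \<in> nline n x"
    using lx by (auto simp: nline_def convm convm2)
  have "vadd y (smul 4 (unitv n (n - 1))) = x[m := x!m + (t + 4)]" using ly ym y by (simp add: convm convm2 convm3 add.assoc)
  moreover have "L (y[m := y!m + 4]) = i" using Lshift[OF ly, of "y!m"] Ly by simp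
  ultimately show "vadd y (smul 4 (unitv n (n - 1))) \<in> layer n C i \<inter> nline n x"
    using online ly lx convm[OF ly] by (auto simp: in_layer)
  have "vadd y (smul (-4) (unitv n (n - 1))) = x[m := x!m + (t - 4)]" using ly ym y by (simp add: convm convm2 convm3 algebra_simps)
  moreover have "L (y[m := y!m + -4]) = i" using Lshift[OF ly, of "y!m - 4"] Ly by simp
  ultimately show "vadd y (smul (-4) (unitv n (n - 1))) \<in> layer n C i \<inter> nline n x"
    using online ly lx convm[OF ly] by (auto simp: in_layer)
  define d where "d = (if even (y!m) then -1 else (1::int))"
  have pe: "partner n y = x[m := x!m + (t + d)]"
    using Lpart[OF ly] y ym by (simp add: add.assoc d_def)
  moreover have "L (partner n y) = i" using conjunct2[OF Lpart[OF ly]] Ly by simp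
  ultimately show "partner n y \<in> layer n C i \<inter> nline n x"
    using online[of "t+d"] lx by (simp add: in_layer)
next
  fix x assume xv: "x \<in> vtx n"
  have lx: "length x = n" using xv by (simp add: vtx_def)
  define a where "a = ell x 0"
  define b where "b = ell x 1"
  have ab: "b = a + 1 \<or> a = b + 1" using ell_step[OF lx, of 0] by (simp add: a_def b_def)
  have ar: "a \<le> \<rho>" "b \<le> \<rho>" using Lle lx by (auto simp: a_def b_def ell_def)
  define i where "i = min a b"
  define r :: int where "r = (if a = i then 0 else 1)"
  have key: "\<And>s. ell x s = (if even (s + r) then i else i + 1)"
  proof -
    fix s
    show "ell x s = (if even (s + r) then i else i + 1)"
      using ell_par[OF lx, of s] ab by (auto simp: i_def r_def a_def[symmetric] b_def[symmetric])
  qed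
  show "\<exists>i<\<rho>. \<exists>r::int. \<forall>s::int.
        (let k = (if even (s + r) then i else i + 1) in
           vadd x (smul (2 * s - x ! (n - 1)) (unitv n (n - 1))) \<in> layer n C k
         \<and> vadd x (smul (2 * s - 1 - x ! (n - 1)) (unitv n (n - 1))) \<in> layer n C k)"
  proof (intro exI[of _ i] conjI exI[of _ r] allI)
    show "i < \<rho>" using ab ar by (auto simp: i_def)
    fix s :: int
    have "vadd x (smul (2 * s - x ! (n - 1)) (unitv n (n - 1))) = x[m := 2*s]" using lx by (simp add: convm convm2 convm3)
    moreover have "vadd x (smul (2 * s - 1 - x ! (n - 1)) (unitv n (n - 1))) = x[m := 2*s - 1]" using lx by (simp add: convm convm2 convm3)
    moreover have "L (x[m := 2*s]) = ell x s" by (simp add: ell_def)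
    moreover have "L (x[m := 2*s - 1]) = ell x s" by (rule ell2[OF lx])
    ultimately show "let k = (if even (s + r) then i else i + 1) in
           vadd x (smul (2 * s - x ! (n - 1)) (unitv n (n - 1))) \<in> layer n C k
         \<and> vadd x (smul (2 * s - 1 - x ! (n - 1)) (unitv n (n - 1))) \<in> layer n C k"
      using key[of s] lx by (simp add: in_layer Let_def)
  qed
qed

end

theorem mainTheorem8:
  fixes n \<rho> :: nat and C :: "int list set"
  assumes "n \<ge> 1"
    and "all_ones_CRC n C \<rho>"
    and "replicate n 0 \<in> C"
    and "smul (-1) (unitv n (n - 1)) \<in> C"
  shows
    "(\<forall>x\<in>vtx n. even (x ! (n - 1)) \<longrightarrow>
        (\<exists>i\<le>\<rho>. x \<in> layer n C i \<and> vadd x (smul (-1) (unitv n (n - 1))) \<in> layer n C i))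
   \<and> (\<forall>x\<in>vtx n. \<forall>i. layer n C i \<inter> nline n x \<noteq> {} \<longrightarrow>
        (\<forall>y\<in>layer n C i \<inter> nline n x.
            vadd y (smul 4 (unitv n (n - 1))) \<in> layer n C i \<inter> nline n x
          \<and> vadd y (smul (-4) (unitv n (n - 1))) \<in> layer n C i \<inter> nline n x
          \<and> partner n y \<in> layer n C i \<inter> nline n x))
   \<and> (\<forall>x\<in>vtx n. \<exists>i<\<rho>. \<exists>r::int. \<forall>s::int.
        (let k = (if even (s + r) then i else i + 1) in
           vadd x (smul (2 * s - x ! (n - 1)) (unitv n (n - 1))) \<in> layer n C k
         \<and> vadd x (smul (2 * s - 1 - x ! (n - 1)) (unitv n (n - 1))) \<in> layer n C k))"
proof -
  interpret AO n \<rho> C using assms by unfold_locales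
  show ?thesis by (rule main)
qed

end
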